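(* Let $G$ be a connected graph with $n$ vertices, and let $L$ be a list-assignment of $G$. If $|L(v)|\ge \deg(v)+1$ for all $v\in V(G)$ and $|L(w)|\ge \deg(w)+2$ for at least one $w\in V(G)$, then $\mathcal{C}(G,L)$ is connected and has diameter at most $\tfrac12(3n^2+5n)$.
   Context: A list-assignment $L$ of a graph $G$ assigns to each vertex $v$ a finite set $L(v)\subseteq\mathbb{N}$. A (proper) $L$-colouring is a proper colouring $\varphi:V(G)\to\mathbb{N}$ with $\varphi(v)\in L(v)$ for all $v$. A recolouring step changes the colour of a single vertex $v$ to another colour of $L(v)$ so that the result is again a proper $L$-colouring. The list colouring reconfiguration graph $\mathcal{C}(G,L)$ has as vertices all proper $L$-colourings of $G$, two being adjacent if one is obtained from the other by a single recolouring step. $\deg(v)$ is the number of neighbours of $v$. *)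

theory Defs
  imports Main
begin

definition simple_graph :: "'a set \<Rightarrow> ('a \<Rightarrow> 'a \<Rightarrow> bool) \<Rightarrow> bool" where
  "simple_graph V E \<longleftrightarrow> finite V \<and> (\<forall>u v. E u v \<longrightarrow> u \<in> V \<and> v \<in> V)
     \<and> (\<forall>u v. E u v \<longrightarrow> E v u) \<and> (\<forall>v. \<not> E v v)"

definition graph_connected :: "'a set \<Rightarrow> ('a \<Rightarrow> 'a \<Rightarrow> bool) \<Rightarrow> bool" where
  "graph_connected V E \<longleftrightarrow> (\<forall>u\<in>V. \<forall>v\<in>V. (u, v) \<in> {(x, y). E x y}\<^sup>*)"

definition degree :: "'a set \<Rightarrow> ('a \<Rightarrow> 'a \<Rightarrow> bool) \<Rightarrow> 'a \<Rightarrow> nat" where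
  "degree V E v = card {u \<in> V. E v u}"

text \<open>Proper L-colourings; values outside V are fixed to undefined so that colourings
  are determined by their restriction to V.\<close>
definition L_colouring :: "'a set \<Rightarrow> ('a \<Rightarrow> 'a \<Rightarrow> bool) \<Rightarrow> ('a \<Rightarrow> nat set) \<Rightarrow> ('a \<Rightarrow> nat) \<Rightarrow> bool" where
  "L_colouring V E L \<phi> \<longleftrightarrow> (\<forall>v\<in>V. \<phi> v \<in> L v) \<and> (\<forall>u v. E u v \<longrightarrow> \<phi> u \<noteq> \<phi> v)
     \<and> (\<forall>v. v \<notin> V \<longrightarrow> \<phi> v = undefined)"

definition recolour_step :: "'a set \<Rightarrow> ('a \<Rightarrow> 'a \<Rightarrow> bool) \<Rightarrow> ('a \<Rightarrow> nat set) \<Rightarrow> (('a \<Rightarrow> nat) \<times> ('a \<Rightarrow> nat)) set" where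
  "recolour_step V E L = {(\<phi>, \<psi>). L_colouring V E L \<phi> \<and> L_colouring V E L \<psi>
     \<and> (\<exists>v\<in>V. \<phi> v \<noteq> \<psi> v \<and> (\<forall>u. u \<noteq> v \<longrightarrow> \<phi> u = \<psi> u))}"

end

theory Submission
  imports Defs
begin
lemma rp_trans: "(a,b) \<in> R^^m \<Longrightarrow> (b,c) \<in> R^^n \<Longrightarrow> (a,c) \<in> R^^(m+n)"
  by (auto simp: relpow_add)

lemma rp_map:
  assumes "\<And>a b. (a,b) \<in> R \<Longrightarrow> (f a, f b) \<in> S"
  shows "(x,y) \<in> R^^k \<Longrightarrow> (f x, f y) \<in> S^^k"
proof (induction k arbitrary: y)
  case 0 thus ?case by simp
next
  case (Suc k)
  then obtain z where "(x,z) \<in> R^^k" "(z,y) \<in> R" by auto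
  thus ?case using Suc assms by (meson relpow_Suc_I)
qed

locale G0 =
  fixes V :: "'a set" and E :: "'a \<Rightarrow> 'a \<Rightarrow> bool" and L :: "'a \<Rightarrow> nat set"
  assumes sg: "simple_graph V E" and finL: "\<forall>v\<in>V. finite (L v)"
    and degL: "\<forall>v\<in>V. card (L v) \<ge> degree V E v + 1"
begin

lemma finV: "finite V" using sg unfolding simple_graph_def by simp
lemma Ein1: "E u v \<Longrightarrow> u \<in> V" using sg unfolding simple_graph_def by blast
lemma Ein2: "E u v \<Longrightarrow> v \<in> V" using sg unfolding simple_graph_def by blast
lemma Esym: "E u v \<Longrightarrow> E v u" using sg unfolding simple_graph_def by blast
lemma Eirr: "\<not> E v v" using sg unfolding simple_graph_def by blast

lemma one_step:
  assumes "L_colouring V E L \<alpha>" "x \<in> V" "b \<in> L x" "b \<noteq> \<alpha> x" "\<forall>y. E x y \<longrightarrow> \<alpha> y \<noteq> b"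
  shows "(\<alpha>, \<alpha>(x:=b)) \<in> recolour_step V E L" "L_colouring V E L (\<alpha>(x:=b))"
proof -
  show c: "L_colouring V E L (\<alpha>(x:=b))"
    unfolding L_colouring_def
  proof (intro conjI allI impI ballI)
    fix v assume "v \<in> V" thus "(\<alpha>(x:=b)) v \<in> L v" using assms(1,3) unfolding L_colouring_def by auto
  next
    fix u v assume "E u v"
    thus "(\<alpha>(x:=b)) u \<noteq> (\<alpha>(x:=b)) v" using assms(1,5) Esym[of u v] Eirr
      unfolding L_colouring_def by (cases "u = x"; cases "v = x") auto
  next
    fix v assume "v \<notin> V" thus "(\<alpha>(x:=b)) v = undefined" using assms(1,2) unfolding L_colouring_def by auto
  qed
  show "(\<alpha>, \<alpha>(x:=b)) \<in> recolour_step V E L"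
    unfolding recolour_step_def using c assms by auto
qed

lemma tight:
  assumes "L_colouring V E L \<alpha>" "x \<in> V" "\<forall>b\<in>L x. b \<noteq> \<alpha> x \<longrightarrow> (\<exists>y. E x y \<and> \<alpha> y = b)"
  shows "inj_on \<alpha> {y\<in>V. E x y}" "\<alpha> ` {y\<in>V. E x y} = L x - {\<alpha> x}"
    "card (L x) = degree V E x + 1"
proof -
  let ?N = "{y\<in>V. E x y}"
  have fN: "finite ?N" using finV by simp
  have sub: "L x - {\<alpha> x} \<subseteq> \<alpha> ` ?N" using assms(3) Ein2 by blast
  have fL: "finite (L x)" using finL assms(2) by simp
  have ax: "\<alpha> x \<in> L x" using assms(1,2) unfolding L_colouring_def by simp
  have cL: "card (L x - {\<alpha> x}) = card (L x) - 1" using ax fL by simp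
  have dg: "card (L x) \<ge> card ?N + 1" using degL assms(2) unfolding degree_def by simp
  have c1: "card (L x - {\<alpha> x}) \<le> card (\<alpha> ` ?N)" using sub fN by (simp add: card_mono)
  have c2: "card (\<alpha> ` ?N) \<le> card ?N" using card_image_le fN by simp
  have eq: "card (\<alpha> ` ?N) = card ?N" using c1 c2 cL dg by linarith
  show "inj_on \<alpha> ?N" using eq fN by (simp add: eq_card_imp_inj_on)
  have "L x - {\<alpha> x} = \<alpha> ` ?N"
    using card_seteq[OF finite_imageI[OF fN] sub] c1 c2 cL dg by linarith
  thus "\<alpha> ` ?N = L x - {\<alpha> x}" by simp
  show "card (L x) = degree V E x + 1" unfolding degree_def using c1 c2 cL dg by linarith
qed

end

locale G1 = G0 +
  fixes w :: 'a and d :: "'a \<Rightarrow> nat"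
  assumes wV: "w \<in> V" and wslack: "card (L w) \<ge> degree V E w + 2"
    and d0: "d w = 0" and dlip: "\<And>x y. E x y \<Longrightarrow> d x \<le> d y + 1"
    and dpar: "\<And>x. x \<in> V \<Longrightarrow> x \<noteq> w \<Longrightarrow> \<exists>p. E x p \<and> d p + 1 = d x"
begin

lemma move:
  assumes "x \<in> V" "L_colouring V E L \<alpha>"
  shows "\<exists>\<alpha>' k. (\<alpha>,\<alpha>') \<in> (recolour_step V E L)^^k \<and> L_colouring V E L \<alpha>' \<and> k \<le> d x + 1 \<and> \<alpha>' x \<noteq> \<alpha> x
     \<and> (\<forall>y. \<alpha>' y \<noteq> \<alpha> y \<longrightarrow> y = x \<or> (d y + 1 = d x \<and> E x y \<and> \<alpha>' y \<noteq> \<alpha> x) \<or> d y + 2 \<le> d x)"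
  using assms
proof (induction "d x" arbitrary: x \<alpha> rule: less_induct)
  case less
  show ?case
  proof (cases "\<exists>b\<in>L x. b \<noteq> \<alpha> x \<and> (\<forall>y. E x y \<longrightarrow> \<alpha> y \<noteq> b)")
    case True
    then obtain b where b: "b \<in> L x" "b \<noteq> \<alpha> x" "\<forall>y. E x y \<longrightarrow> \<alpha> y \<noteq> b" by blast
    have s: "(\<alpha>, \<alpha>(x:=b)) \<in> recolour_step V E L" "L_colouring V E L (\<alpha>(x:=b))"
      using one_step[OF less.prems(2) less.prems(1) b] by auto
    show ?thesis
      apply (rule exI[of _ "\<alpha>(x:=b)"], rule exI[of _ 1])
      using s b by auto
  next
    case False
    hence T: "\<forall>b\<in>L x. b \<noteq> \<alpha> x \<longrightarrow> (\<exists>y. E x y \<and> \<alpha> y = b)" by blast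
    have "x \<noteq> w"
    proof
      assume "x = w"
      then have "card (L w) = degree V E w + 1" using tight(3)[OF less.prems(2,1) T] by simp
      with wslack show False by simp
    qed
    then obtain p where p: "E x p" "d p + 1 = d x" using dpar less.prems(1) by blast
    have pV: "p \<in> V" using Ein2 p(1) by blast
    obtain \<alpha>1 k1 where r1: "(\<alpha>,\<alpha>1) \<in> (recolour_step V E L)^^k1" "L_colouring V E L \<alpha>1"
      "k1 \<le> d p + 1" "\<alpha>1 p \<noteq> \<alpha> p"
      and ch: "\<forall>y. \<alpha>1 y \<noteq> \<alpha> y \<longrightarrow> y = p \<or> (d y + 1 = d p \<and> E p y \<and> \<alpha>1 y \<noteq> \<alpha> p) \<or> d y + 2 \<le> d p"
      using less.hyps[of p \<alpha>] p(2) pV less.prems(2) by auto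
    have xu: "\<alpha>1 x = \<alpha> x"
    proof (rule ccontr)
      assume "\<alpha>1 x \<noteq> \<alpha> x"
      with ch have "x = p \<or> d x + 1 = d p \<or> d x + 2 \<le> d p" by blast
      thus False using p Eirr by auto
    qed
    have inj: "inj_on \<alpha> {y\<in>V. E x y}" using tight(1)[OF less.prems(2,1) T] .
    have img: "\<alpha> ` {y\<in>V. E x y} = L x - {\<alpha> x}" using tight(2)[OF less.prems(2,1) T] .
    have apL: "\<alpha> p \<in> L x" using img pV p(1) by blast
    have apx: "\<alpha> p \<noteq> \<alpha>1 x" using xu less.prems(2) p(1) unfolding L_colouring_def by metis
    have free: "\<forall>y. E x y \<longrightarrow> \<alpha>1 y \<noteq> \<alpha> p"
    proof (intro allI impI)
      fix y assume xy: "E x y"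
      show "\<alpha>1 y \<noteq> \<alpha> p"
      proof (cases "y = p")
        case True thus ?thesis using r1(4) by simp
      next
        case False
        have "\<alpha>1 y = \<alpha> y"
        proof (rule ccontr)
          assume "\<alpha>1 y \<noteq> \<alpha> y"
          with ch False have "d y + 1 = d p \<or> d y + 2 \<le> d p" by blast
          moreover have "d x \<le> d y + 1" using dlip[OF xy] .
          ultimately show False using p by linarith
        qed
        moreover have "\<alpha> y \<noteq> \<alpha> p" using inj False xy p(1) Ein2 unfolding inj_on_def by blast
        ultimately show ?thesis by simp
      qed
    qed
    have s2: "(\<alpha>1, \<alpha>1(x:=\<alpha> p)) \<in> recolour_step V E L" "L_colouring V E L (\<alpha>1(x:=\<alpha> p))"
      using one_step[OF r1(2) less.prems(1) apL apx free] by auto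
    have a1px: "\<alpha>1 p \<noteq> \<alpha> x" using r1(2) p(1) xu unfolding L_colouring_def by metis
    show ?thesis
      apply (rule exI[of _ "\<alpha>1(x:=\<alpha> p)"], rule exI[of _ "k1+1"])
      using rp_trans[OF r1(1), where n=1] s2 r1(3) p apx xu ch a1px
      apply (auto)
      done
  qed
qed

lemma levels: "x \<in> V \<Longrightarrow> d x + 1 \<le> card {y\<in>V. d y \<le> d x}"
proof (induction "d x" arbitrary: x rule: less_induct)
  case less
  show ?case
  proof (cases "x = w")
    case True
    then have "{w} \<subseteq> {y\<in>V. d y \<le> d x}" using wV by auto
    then have "card {w} \<le> card {y\<in>V. d y \<le> d x}" using finV by (intro card_mono) auto
    thus ?thesis using True d0 by simp
  next
    case False
    obtain p where p: "E x p" "d p + 1 = d x" using dpar less.prems False by blast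
    have pV: "p \<in> V" using Ein2 p(1) by blast
    have IH: "d p + 1 \<le> card {y\<in>V. d y \<le> d p}" using less.hyps[of p] p pV by simp
    have "x \<in> {y\<in>V. d y \<le> d x}" "x \<notin> {y\<in>V. d y \<le> d p}" using p less.prems by auto
    moreover have "{y\<in>V. d y \<le> d p} \<subseteq> {y\<in>V. d y \<le> d x}" using p by auto
    ultimately have "{y\<in>V. d y \<le> d p} \<subset> {y\<in>V. d y \<le> d x}" by blast
    hence "card {y\<in>V. d y \<le> d p} < card {y\<in>V. d y \<le> d x}" using finV
      by (intro psubset_card_mono) auto
    thus ?thesis using IH p by linarith
  qed
qed

lemma dbound: "x \<in> V \<Longrightarrow> d x + 1 \<le> card V"
  using levels[of x] card_mono[OF finV, of "{y\<in>V. d y \<le> d x}"] by auto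


lemma recol:
  assumes vV: "v \<in> V" and vmax: "\<forall>x\<in>V. d x \<le> d v" and cL: "c \<in> L v"
    and col: "L_colouring V E L \<alpha>"
  shows "\<exists>\<alpha>1 k. (\<alpha>,\<alpha>1) \<in> (recolour_step V E L)^^k \<and> L_colouring V E L \<alpha>1 \<and> \<alpha>1 v = c
      \<and> k \<le> 2 * card {y\<in>V. E v y \<and> \<alpha> y = c} + d v + 2"
  using col
proof (induction "card {y\<in>V. E v y \<and> \<alpha> y = c}" arbitrary: \<alpha> rule: less_induct)
  case less
  let ?S = "{y\<in>V. E v y \<and> \<alpha> y = c}"
  have fS: "finite ?S" using finV by simp
  show ?case
  proof (cases "?S = {}")
    case True
    show ?thesis
    proof (cases "\<alpha> v = c")
      case True
      show ?thesis
        apply (rule exI[of _ \<alpha>], rule exI[of _ 0]) using True less.prems by auto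
    next
      case False
      have fr: "\<forall>y. E v y \<longrightarrow> \<alpha> y \<noteq> c" using \<open>?S = {}\<close> Ein2 by blast
      have s: "(\<alpha>, \<alpha>(v:=c)) \<in> recolour_step V E L" "L_colouring V E L (\<alpha>(v:=c))"
        using one_step[OF less.prems vV cL] False fr by auto
      show ?thesis
        apply (rule exI[of _ "\<alpha>(v:=c)"], rule exI[of _ 1]) using s by auto
    qed
  next
    case False
    then obtain s where sS: "s \<in> ?S" by blast
    hence s: "s \<in> V" "E v s" "\<alpha> s = c" by auto
    have av: "\<alpha> v \<noteq> c" using less.prems s unfolding L_colouring_def by metis
    have cS: "card ?S \<ge> 1" using sS fS by (metis One_nat_def Suc_leI card_gt_0_iff empty_iff)
    show ?thesis
    proof (cases "\<exists>b\<in>L s. b \<noteq> \<alpha> s \<and> (\<forall>y. E s y \<longrightarrow> \<alpha> y \<noteq> b)")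
      case True
      then obtain b where b: "b \<in> L s" "b \<noteq> \<alpha> s" "\<forall>y. E s y \<longrightarrow> \<alpha> y \<noteq> b" by blast
      have st1: "(\<alpha>, \<alpha>(s:=b)) \<in> recolour_step V E L" "L_colouring V E L (\<alpha>(s:=b))"
        using one_step[OF less.prems s(1) b] by auto
      have Seq: "{y\<in>V. E v y \<and> (\<alpha>(s:=b)) y = c} = ?S - {s}" using b(2) s by auto
      have lt: "card (?S - {s}) < card ?S" using fS sS by (rule card_Diff1_less)
      obtain \<alpha>1 k where r: "(\<alpha>(s:=b),\<alpha>1) \<in> (recolour_step V E L)^^k" "L_colouring V E L \<alpha>1" "\<alpha>1 v = c"
        "k \<le> 2 * card (?S - {s}) + d v + 2"
        using less.hyps[of "\<alpha>(s:=b)"] st1(2) Seq lt by auto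
      have "card (?S - {s}) = card ?S - 1" using sS fS by simp
      show ?thesis
        apply (rule exI[of _ \<alpha>1], rule exI[of _ "1+k"])
        using rp_trans[where m=1, OF _ r(1)] st1(1) r \<open>card (?S - {s}) = card ?S - 1\<close> cS by auto
    next
      case False
      hence Ts: "\<forall>b\<in>L s. b \<noteq> \<alpha> s \<longrightarrow> (\<exists>y. E s y \<and> \<alpha> y = b)" by blast
      show ?thesis
      proof (cases "\<exists>b\<in>L v. b \<noteq> \<alpha> v \<and> (\<forall>y. E v y \<longrightarrow> \<alpha> y \<noteq> b)")
        case True
        then obtain b where b: "b \<in> L v" "b \<noteq> \<alpha> v" "\<forall>y. E v y \<longrightarrow> \<alpha> y \<noteq> b" by blast
        have st1: "(\<alpha>, \<alpha>(v:=b)) \<in> recolour_step V E L" "L_colouring V E L (\<alpha>(v:=b))"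
          using one_step[OF less.prems vV b] by auto
        have injs: "inj_on \<alpha> {y\<in>V. E s y}" using tight(1)[OF less.prems s(1) Ts] .
        have imgs: "\<alpha> ` {y\<in>V. E s y} = L s - {\<alpha> s}" using tight(2)[OF less.prems s(1) Ts] .
        have sv: "E s v" using Esym s(2) .
        have svne: "s \<noteq> v" using s(2) Eirr by auto
        have avL: "\<alpha> v \<in> L s" using imgs sv vV by blast
        have avs: "\<alpha> v \<noteq> (\<alpha>(v:=b)) s" using av s svne by simp
        have fr: "\<forall>y. E s y \<longrightarrow> (\<alpha>(v:=b)) y \<noteq> \<alpha> v"
        proof (intro allI impI)
          fix y assume sy: "E s y"
          show "(\<alpha>(v:=b)) y \<noteq> \<alpha> v"
          proof (cases "y = v")
            case True thus ?thesis using b(2) by simp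
          next
            case False
            have "\<alpha> y \<noteq> \<alpha> v" using injs False sy sv vV Ein2 unfolding inj_on_def by blast
            thus ?thesis using False by simp
          qed
        qed
        note st2 = one_step[OF st1(2) s(1) avL avs fr]
        have Seq: "{y\<in>V. E v y \<and> (\<alpha>(v:=b, s:=\<alpha> v)) y = c} = ?S - {s}" using av s Eirr by auto
        have lt: "card (?S - {s}) < card ?S" using fS sS by (rule card_Diff1_less)
        obtain \<alpha>1 k where r: "(\<alpha>(v:=b, s:=\<alpha> v),\<alpha>1) \<in> (recolour_step V E L)^^k" "L_colouring V E L \<alpha>1" "\<alpha>1 v = c"
          "k \<le> 2 * card (?S - {s}) + d v + 2"
          using less.hyps[of "\<alpha>(v:=b, s:=\<alpha> v)"] st2(2) Seq lt by auto
        have "card (?S - {s}) = card ?S - 1" using sS fS by simp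
        have two: "(\<alpha>, \<alpha>(v:=b, s:=\<alpha> v)) \<in> (recolour_step V E L)^^(1+1)"
          using rp_trans[where m=1 and n=1, OF _ _] st1(1) st2(1) by (metis relpow_1)
        show ?thesis
          apply (rule exI[of _ \<alpha>1], rule exI[of _ "(1+1)+k"])
          using rp_trans[OF two r(1)] r \<open>card (?S - {s}) = card ?S - 1\<close> cS by auto
      next
        case False
        hence Tv: "\<forall>b\<in>L v. b \<noteq> \<alpha> v \<longrightarrow> (\<exists>y. E v y \<and> \<alpha> y = b)" by blast
        have injv: "inj_on \<alpha> {y\<in>V. E v y}" using tight(1)[OF less.prems vV Tv] .
        have Sone: "\<And>y. y \<in> ?S \<Longrightarrow> y = s" using injv s unfolding inj_on_def by auto
        obtain \<alpha>1 k1 where r1: "(\<alpha>,\<alpha>1) \<in> (recolour_step V E L)^^k1" "L_colouring V E L \<alpha>1"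
          "k1 \<le> d s + 1" "\<alpha>1 s \<noteq> \<alpha> s"
          and ch: "\<forall>y. \<alpha>1 y \<noteq> \<alpha> y \<longrightarrow> y = s \<or> (d y + 1 = d s \<and> E s y \<and> \<alpha>1 y \<noteq> \<alpha> s) \<or> d y + 2 \<le> d s"
          using move[OF s(1) less.prems] by blast
        have dsv: "d s \<le> d v" using vmax s by auto
        have vu: "\<alpha>1 v = \<alpha> v"
        proof (rule ccontr)
          assume "\<alpha>1 v \<noteq> \<alpha> v"
          with ch have "v = s \<or> d v + 1 = d s \<or> d v + 2 \<le> d s" by blast
          thus False using dsv s(2) Eirr by auto
        qed
        have fr: "\<forall>y. E v y \<longrightarrow> \<alpha>1 y \<noteq> c"
        proof (intro allI impI)
          fix y assume vy: "E v y"
          have yV: "y \<in> V" using Ein2 vy .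
          show "\<alpha>1 y \<noteq> c"
          proof (cases "\<alpha>1 y = \<alpha> y")
            case True
            show ?thesis
            proof
              assume "\<alpha>1 y = c"
              then have "y \<in> ?S" using True vy yV by auto
              then have "y = s" using Sone by blast
              thus False using True r1(4) by simp
            qed
          next
            case False
            with ch have "y = s \<or> (d y + 1 = d s \<and> E s y \<and> \<alpha>1 y \<noteq> \<alpha> s) \<or> d y + 2 \<le> d s" by blast
            moreover have "d v \<le> d y + 1" using dlip[OF vy] .
            ultimately show ?thesis using r1(4) s(3) dsv by auto
          qed
        qed
        have st2: "(\<alpha>1, \<alpha>1(v:=c)) \<in> recolour_step V E L" "L_colouring V E L (\<alpha>1(v:=c))"
          using one_step[OF r1(2) vV cL] vu av fr by auto
        show ?thesis
          apply (rule exI[of _ "\<alpha>1(v:=c)"], rule exI[of _ "k1+1"])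
          using rp_trans[OF r1(1), where n=1] st2 r1(3) dsv by auto
      qed
    qed
  qed
qed

end
lemma main:
  "\<forall>V (E::'a\<Rightarrow>'a\<Rightarrow>bool) L. card V = n \<longrightarrow> simple_graph V E \<longrightarrow> graph_connected V E
   \<longrightarrow> (\<forall>v\<in>V. finite (L v)) \<longrightarrow> (\<forall>v\<in>V. card (L v) \<ge> degree V E v + 1)
   \<longrightarrow> (V \<noteq> {} \<longrightarrow> (\<exists>w\<in>V. card (L w) \<ge> degree V E w + 2))
   \<longrightarrow> (\<forall>\<alpha> \<beta>. L_colouring V E L \<alpha> \<and> L_colouring V E L \<beta> \<longrightarrow>
        (\<exists>k. 2*k \<le> 3*n^2+5*n \<and> (\<alpha>,\<beta>) \<in> (recolour_step V E L)^^k))"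
proof (induction n)
  case 0
  show ?case
  proof (intro allI impI)
    fix V :: "'a set" and E L \<alpha> \<beta>
    assume h: "card V = 0" "simple_graph V E"
      "L_colouring V E L \<alpha> \<and> L_colouring V E L \<beta>"
    have "finite V" using h(2) unfolding simple_graph_def by simp
    hence "V = {}" using h(1) by simp
    hence "\<alpha> = \<beta>" using h(3) unfolding L_colouring_def by auto
    thus "\<exists>k. 2*k \<le> 3*0^2+5*0 \<and> (\<alpha>,\<beta>) \<in> (recolour_step V E L)^^k"
      by (intro exI[of _ 0]) simp
  qed
next
  case (Suc n)
  show ?case
  proof (intro allI impI)
    fix V :: "'a set" and E L \<alpha> \<beta>
    assume cV: "card V = Suc n" and sg: "simple_graph V E" and con: "graph_connected V E"
      and fl: "\<forall>v\<in>V. finite (L v)" and dl: "\<forall>v\<in>V. card (L v) \<ge> degree V E v + 1"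
      and sl: "V \<noteq> {} \<longrightarrow> (\<exists>w\<in>V. card (L w) \<ge> degree V E w + 2)"
      and cab: "L_colouring V E L \<alpha> \<and> L_colouring V E L \<beta>"
    interpret G0 V E L using sg fl dl by unfold_locales
    have Vne: "V \<noteq> {}" using cV by auto
    then obtain w where wV: "w \<in> V" and ws: "card (L w) \<ge> degree V E w + 2" using sl by blast
    define R where "R = {(x,y). E x y}"
    define d where "d = (\<lambda>x. LEAST k. (w,x) \<in> R^^k)"
    have reach: "\<And>x. x \<in> V \<Longrightarrow> (w,x) \<in> R^^(d x)"
    proof -
      fix x assume "x \<in> V"
      hence "(w,x) \<in> R^*" using con wV unfolding graph_connected_def R_def by blast
      then obtain k where "(w,x) \<in> R^^k" using rtrancl_power by blast
      thus "(w,x) \<in> R^^(d x)" unfolding d_def by (rule LeastI)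
    qed
    have d0: "d w = 0" unfolding d_def by (rule Least_eq_0) simp
    have dlip: "\<And>x y. E x y \<Longrightarrow> d x \<le> d y + 1"
    proof -
      fix x y assume xy: "E x y"
      have "(w,y) \<in> R^^(d y)" using reach Ein2 xy by blast
      moreover have "(y,x) \<in> R" using Esym xy unfolding R_def by simp
      ultimately have "(w,x) \<in> R^^(Suc (d y))" by (rule relpow_Suc_I)
      thus "d x \<le> d y + 1" unfolding d_def by (simp add: Least_le)
    qed
    have dpar: "\<And>x. x \<in> V \<Longrightarrow> x \<noteq> w \<Longrightarrow> \<exists>p. E x p \<and> d p + 1 = d x"
    proof -
      fix x assume xV: "x \<in> V" and xw: "x \<noteq> w"
      have r: "(w,x) \<in> R^^(d x)" using reach xV .
      have "d x \<noteq> 0" using r xw by (metis relpow_0_E)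
      then obtain m where m: "d x = Suc m" by (cases "d x") auto
      then obtain y where y: "(w,y) \<in> R^^m" "(y,x) \<in> R" using r by (metis relpow_Suc_E)
      have "d y \<le> m" using y(1) unfolding d_def by (simp add: Least_le)
      moreover have E: "E x y" using y(2) Esym unfolding R_def by simp
      moreover have "d x \<le> d y + 1" using dlip E by blast
      ultimately show "\<exists>p. E x p \<and> d p + 1 = d x" using m by (intro exI[of _ y]) auto
    qed
    interpret G1 V E L w d using wV ws d0 dlip dpar by unfold_locales auto
    obtain v where vV: "v \<in> V" and vmax: "\<forall>x\<in>V. d x \<le> d v"
    proof -
      have "Max (d ` V) \<in> d ` V" using finV Vne by simp
      then obtain v where "v \<in> V" "d v = Max (d ` V)" by auto
      moreover have "\<forall>x\<in>V. d x \<le> Max (d ` V)" using finV by simp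
      ultimately show ?thesis using that by auto
    qed
    define c where "c = \<beta> v"
    have cL: "c \<in> L v" using cab vV unfolding c_def L_colouring_def by simp
    obtain \<alpha>1 k1 where r1: "(\<alpha>,\<alpha>1) \<in> (recolour_step V E L)^^k1" "L_colouring V E L \<alpha>1" "\<alpha>1 v = c"
      and k1: "k1 \<le> 2 * card {y\<in>V. E v y \<and> \<alpha> y = c} + d v + 2"
      using recol[OF vV vmax cL] cab by blast
    have "card {y\<in>V. E v y \<and> \<alpha> y = c} \<le> card V" using finV by (intro card_mono) auto
    moreover have "d v + 1 \<le> card V" using dbound vV .
    ultimately have k1b: "k1 \<le> 3 * n + 4" using k1 cV by linarith
    define V' where "V' = V - {v}"
    define E' where "E' = (\<lambda>x y. E x y \<and> x \<noteq> v \<and> y \<noteq> v)"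
    define L' where "L' = (\<lambda>u. if E u v then L u - {c} else L u)"
    have cV': "card V' = n" using cV vV finV unfolding V'_def by simp
    have sg': "simple_graph V' E'" using sg unfolding simple_graph_def V'_def E'_def by auto
    define R' where "R' = {(x,y). E' x y}"
    have reach': "\<And>x. x \<in> V \<Longrightarrow> x \<noteq> v \<Longrightarrow> (w,x) \<in> R'^*"
    proof -
      fix x assume "x \<in> V" "x \<noteq> v"
      thus "(w,x) \<in> R'^*"
      proof (induction "d x" arbitrary: x rule: less_induct)
        case less
        show ?case
        proof (cases "x = w")
          case True thus ?thesis by simp
        next
          case False
          obtain p where p: "E x p" "d p + 1 = d x" using dpar less.prems False by blast
          have pV: "p \<in> V" using Ein2 p(1) by blast
          have pv: "p \<noteq> v" using p vmax less.prems by fastforce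
          have "(w,p) \<in> R'^*" using less.hyps[of p] p pV pv by simp
          moreover have "(p,x) \<in> R'" using Esym[OF p(1)] pv less.prems unfolding R'_def E'_def by simp
          ultimately show ?thesis by simp
        qed
      qed
    qed
    have symR': "sym R'" unfolding R'_def E'_def sym_def using Esym by blast
    have con': "graph_connected V' E'"
      unfolding graph_connected_def
    proof (intro ballI)
      fix x y assume "x \<in> V'" "y \<in> V'"
      hence "(w,x) \<in> R'^*" "(w,y) \<in> R'^*" using reach' unfolding V'_def by auto
      moreover have "(x,w) \<in> R'^*" using \<open>(w,x) \<in> R'^*\<close> symR'
        by (meson sym_rtrancl symD)
      ultimately show "(x, y) \<in> {(x, y). E' x y}\<^sup>*" unfolding R'_def by simp
    qed
    have fl': "\<forall>u\<in>V'. finite (L' u)" using fl unfolding V'_def L'_def by auto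
    have degeq: "\<And>u. u \<in> V' \<Longrightarrow> degree V' E' u + (if E u v then 1 else 0) = degree V E u"
    proof -
      fix u assume uV': "u \<in> V'"
      have eq: "{x\<in>V'. E' u x} = {x\<in>V. E u x} - {v}" using uV' unfolding V'_def E'_def by auto
      have fN: "finite {x\<in>V. E u x}" using finV by simp
      show "degree V' E' u + (if E u v then 1 else 0) = degree V E u"
        unfolding degree_def eq using fN vV
        by (cases "E u v") (auto simp: card_Diff_singleton_if card_gt_0_iff Suc_le_eq intro!: Suc_pred)
    qed
    have cardL': "\<And>u. u \<in> V' \<Longrightarrow> card (L' u) + (if E u v then 1 else 0) \<ge> card (L u)"
    proof -
      fix u assume "u \<in> V'"
      hence fu: "finite (L u)" using fl unfolding V'_def by auto
      show "card (L' u) + (if E u v then 1 else 0) \<ge> card (L u)"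
        unfolding L'_def using fu by (auto simp: card_Diff_singleton_if)
    qed
    have dl': "\<forall>u\<in>V'. card (L' u) \<ge> degree V' E' u + 1"
    proof
      fix u assume uV': "u \<in> V'"
      have "card (L u) \<ge> degree V E u + 1" using dl uV' unfolding V'_def by auto
      thus "card (L' u) \<ge> degree V' E' u + 1" using degeq[OF uV'] cardL'[OF uV'] by (cases "E u v") auto
    qed
    have sl': "V' \<noteq> {} \<longrightarrow> (\<exists>w\<in>V'. card (L' w) \<ge> degree V' E' w + 2)"
    proof
      assume "V' \<noteq> {}"
      then obtain x where "x \<in> V'" by blast
      have wv: "w \<noteq> v"
      proof
        assume "w = v"
        have xV: "x \<in> V" "x \<noteq> v" using \<open>x \<in> V'\<close> unfolding V'_def by auto
        then obtain p where "E x p" "d p + 1 = d x" using dpar \<open>w = v\<close> by blast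
        thus False using vmax xV \<open>w = v\<close> d0 by fastforce
      qed
      hence wV': "w \<in> V'" using wV unfolding V'_def by simp
      have "card (L' w) \<ge> degree V' E' w + 2" using degeq[OF wV'] cardL'[OF wV'] ws by (cases "E w v") auto
      thus "\<exists>w\<in>V'. card (L' w) \<ge> degree V' E' w + 2" using wV' by blast
    qed
    have restr: "\<And>\<gamma>. L_colouring V E L \<gamma> \<Longrightarrow> \<gamma> v = c \<Longrightarrow> L_colouring V' E' L' (\<gamma>(v:=undefined))"
      unfolding L_colouring_def V'_def E'_def L'_def by auto
    have a1': "L_colouring V' E' L' (\<alpha>1(v:=undefined))" using restr r1(2,3) .
    have b': "L_colouring V' E' L' (\<beta>(v:=undefined))" using restr cab c_def by blast
    obtain k' where k': "2*k' \<le> 3*n^2+5*n" "(\<alpha>1(v:=undefined), \<beta>(v:=undefined)) \<in> (recolour_step V' E' L')^^k'"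
      using Suc.IH cV' sg' con' fl' dl' sl' a1' b' by blast
    have lift: "\<And>\<gamma> \<gamma>'. (\<gamma>, \<gamma>') \<in> recolour_step V' E' L' \<Longrightarrow> (\<gamma>(v:=c), \<gamma>'(v:=c)) \<in> recolour_step V E L"
    proof -
      have ext: "\<And>\<gamma>. L_colouring V' E' L' \<gamma> \<Longrightarrow> L_colouring V E L (\<gamma>(v:=c))"
      proof -
        fix \<gamma> assume g: "L_colouring V' E' L' \<gamma>"
        show "L_colouring V E L (\<gamma>(v:=c))"
          unfolding L_colouring_def
        proof (intro conjI allI impI ballI)
          fix u assume "u \<in> V" thus "(\<gamma>(v:=c)) u \<in> L u" using g cL
            unfolding L_colouring_def V'_def L'_def by (cases "u = v") (auto split: if_splits)
        next
          fix x y assume xy: "E x y"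
          show "(\<gamma>(v:=c)) x \<noteq> (\<gamma>(v:=c)) y"
          proof (cases "x = v")
            case True
            hence "y \<noteq> v" "y \<in> V" "E y v" using xy Eirr Ein2 Esym by auto
            hence "\<gamma> y \<in> L y - {c}" using g unfolding L_colouring_def V'_def L'_def by force
            thus ?thesis using True \<open>y \<noteq> v\<close> by auto
          next
            case False
            show ?thesis
            proof (cases "y = v")
              case True
              hence "x \<in> V" "E x v" using xy Ein1 by auto
              hence "\<gamma> x \<in> L x - {c}" using g False unfolding L_colouring_def V'_def L'_def by force
              thus ?thesis using True False by auto
            next
              case False
              thus ?thesis using g xy \<open>x \<noteq> v\<close> unfolding L_colouring_def E'_def by auto
            qed
          qed
        next
          fix x assume "x \<notin> V" thus "(\<gamma>(v:=c)) x = undefined" using g vV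
            unfolding L_colouring_def V'_def by auto
        qed
      qed
      fix \<gamma> \<gamma>' assume st: "(\<gamma>, \<gamma>') \<in> recolour_step V' E' L'"
      then obtain u where u: "u \<in> V'" "\<gamma> u \<noteq> \<gamma>' u" "\<forall>x. x \<noteq> u \<longrightarrow> \<gamma> x = \<gamma>' x"
        and g: "L_colouring V' E' L' \<gamma>" "L_colouring V' E' L' \<gamma>'"
        unfolding recolour_step_def by auto
      show "(\<gamma>(v:=c), \<gamma>'(v:=c)) \<in> recolour_step V E L"
        unfolding recolour_step_def using ext[OF g(1)] ext[OF g(2)] u unfolding V'_def
        by auto
    qed
    have k2: "(\<alpha>1, \<beta>) \<in> (recolour_step V E L)^^k'"
      using rp_map[of "recolour_step V' E' L'" "\<lambda>\<gamma>. \<gamma>(v:=c)", OF lift k'(2)] r1(3) c_def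
      by (simp add: fun_upd_idem)
    have "(\<alpha>, \<beta>) \<in> (recolour_step V E L)^^(k1+k')" using rp_trans[OF r1(1) k2] .
    moreover have "2*(k1+k') \<le> 3*(Suc n)^2+5*(Suc n)" using k1b k'(1) by (simp add: power2_eq_square)
    ultimately show "\<exists>k. 2*k \<le> 3*(Suc n)^2+5*(Suc n) \<and> (\<alpha>,\<beta>) \<in> (recolour_step V E L)^^k" by blast
  qed
qed

theorem mainTheorem1:
  fixes V :: "'a set" and E :: "'a \<Rightarrow> 'a \<Rightarrow> bool" and L :: "'a \<Rightarrow> nat set"
  assumes "simple_graph V E"
    and "graph_connected V E"
    and "\<forall>v\<in>V. finite (L v)"
    and "\<forall>v\<in>V. card (L v) \<ge> degree V E v + 1"
    and "\<exists>w\<in>V. card (L w) \<ge> degree V E w + 2"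
  shows "\<forall>\<phi> \<psi>. L_colouring V E L \<phi> \<and> L_colouring V E L \<psi> \<longrightarrow>
           (\<exists>k. 2 * k \<le> 3 * (card V)^2 + 5 * card V \<and> (\<phi>, \<psi>) \<in> (recolour_step V E L) ^^ k)"
  using main[of "card V"] assms by blast

end
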